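(* If $f\colon[a,b]\to\mathbb{R}$ is Laplace integrable on $[a,b]$, then $f$ is Lebesgue measurable.
   Context: Laplace derivates: for $F$ Perron integrable near $x$, $\underline{LD}_1F(x)$ and $\overline{LD}_1F(x)$ are the minimum of the $\liminf$'s, resp. maximum of the $\limsup$'s, as $s\to\infty$ of $s^2\int_0^\delta e^{-st}[F(x+t)-F(x)]dt$ and $(-s^2)\int_0^\delta e^{-st}[F(x-t)-F(x)]dt$, $\delta>0$ fixed (independent of $\delta$; one-sided at endpoints). A major function of $f$ is a continuous $U$ on $[a,b]$ with $\underline{LD}_1U\geqslant f$ and $\underline{LD}_1U>-\infty$ everywhere; a minor function is a continuous $V$ with $\overline{LD}_1V\leqslant f$ and $\overline{LD}_1V<\infty$ everywhere; $f$ is Laplace integrable if $\sup_V(V(b)-V(a))=\inf_U(U(b)-U(a))$ is finite. *)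

theory Defs
  imports "HOL-Analysis.Analysis"
begin

definition laplace_right :: "(real \<Rightarrow> real) \<Rightarrow> real \<Rightarrow> real \<Rightarrow> real \<Rightarrow> real" where
  "laplace_right F x \<delta> s = s\<^sup>2 * integral {0..\<delta>} (\<lambda>t. exp (- s * t) * (F (x + t) - F x))"

definition laplace_left :: "(real \<Rightarrow> real) \<Rightarrow> real \<Rightarrow> real \<Rightarrow> real \<Rightarrow> real" where
  "laplace_left F x \<delta> s = - (s\<^sup>2) * integral {0..\<delta>} (\<lambda>t. exp (- s * t) * (F (x - t) - F x))"

text \<open>Lower and upper Laplace derivates of F at x relative to [a,b]:
  one-sided at the endpoints; the fixed \<delta> is b - x (right) and x - a (left),
  so that only values of F on [a,b] are used.\<close>

definition lower_LD :: "real \<Rightarrow> real \<Rightarrow> (real \<Rightarrow> real) \<Rightarrow> real \<Rightarrow> ereal" where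
  "lower_LD a b F x =
     (if x = a then Liminf at_top (\<lambda>s. ereal (laplace_right F x (b - x) s))
      else if x = b then Liminf at_top (\<lambda>s. ereal (laplace_left F x (x - a) s))
      else min (Liminf at_top (\<lambda>s. ereal (laplace_right F x (b - x) s)))
               (Liminf at_top (\<lambda>s. ereal (laplace_left F x (x - a) s))))"

definition upper_LD :: "real \<Rightarrow> real \<Rightarrow> (real \<Rightarrow> real) \<Rightarrow> real \<Rightarrow> ereal" where
  "upper_LD a b F x =
     (if x = a then Limsup at_top (\<lambda>s. ereal (laplace_right F x (b - x) s))
      else if x = b then Limsup at_top (\<lambda>s. ereal (laplace_left F x (x - a) s))
      else max (Limsup at_top (\<lambda>s. ereal (laplace_right F x (b - x) s)))
               (Limsup at_top (\<lambda>s. ereal (laplace_left F x (x - a) s))))"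

definition laplace_major :: "real \<Rightarrow> real \<Rightarrow> (real \<Rightarrow> real) \<Rightarrow> (real \<Rightarrow> real) \<Rightarrow> bool" where
  "laplace_major a b f U \<longleftrightarrow> continuous_on {a..b} U \<and>
     (\<forall>x\<in>{a..b}. lower_LD a b U x \<ge> ereal (f x) \<and> lower_LD a b U x > -\<infinity>)"

definition laplace_minor :: "real \<Rightarrow> real \<Rightarrow> (real \<Rightarrow> real) \<Rightarrow> (real \<Rightarrow> real) \<Rightarrow> bool" where
  "laplace_minor a b f V \<longleftrightarrow> continuous_on {a..b} V \<and>
     (\<forall>x\<in>{a..b}. upper_LD a b V x \<le> ereal (f x) \<and> upper_LD a b V x < \<infinity>)"

definition laplace_integrable :: "(real \<Rightarrow> real) \<Rightarrow> real \<Rightarrow> real \<Rightarrow> bool" where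
  "laplace_integrable f a b \<longleftrightarrow>
     (let lo = Sup {ereal (V b - V a) | V. laplace_minor a b f V};
          up = Inf {ereal (U b - U a) | U. laplace_major a b f U}
      in lo = up \<and> \<bar>lo\<bar> \<noteq> \<infinity>)"

end

theory Submission
  imports Defs "HOL-Real_Asymp.Real_Asymp"
begin


lemma lr_integrable:
  fixes F :: "real \<Rightarrow> real"
  assumes "continuous_on {a..b} F" "a \<le> x" "x \<le> b"
  shows "(\<lambda>t. exp (- s * t) * (F (x + t) - F x)) integrable_on {0..b - x}"
proof -
  have "continuous_on {0..b-x} (\<lambda>t. F (x + t))"
    by (rule continuous_on_compose2[OF assms(1)]) (use assms in \<open>auto intro!: continuous_intros\<close>)
  then have "continuous_on {0..b - x} (\<lambda>t. exp (- s * t) * (F (x + t) - F x))"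
    by (auto intro!: continuous_intros)
  then show ?thesis by (rule integrable_continuous_interval)
qed

lemma lr_diff:
  fixes U V :: "real \<Rightarrow> real"
  assumes "continuous_on {a..b} U" "continuous_on {a..b} V" "a \<le> x" "x \<le> b"
  shows "laplace_right (\<lambda>y. U y - V y) x (b - x) s = laplace_right U x (b - x) s - laplace_right V x (b - x) s"
proof -
  have "integral {0..b-x} (\<lambda>t. exp (- s * t) * ((U (x + t) - V (x + t)) - (U x - V x))) =
        integral {0..b-x} (\<lambda>t. exp (- s * t) * (U (x + t) - U x) - exp (- s * t) * (V (x + t) - V x))"
    by (rule integral_cong) (simp add: algebra_simps)
  also have "\<dots> = integral {0..b-x} (\<lambda>t. exp (- s * t) * (U (x + t) - U x)) - integral {0..b-x} (\<lambda>t. exp (- s * t) * (V (x + t) - V x))"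
    by (rule integral_diff[OF lr_integrable[OF assms(1,3,4)] lr_integrable[OF assms(2,3,4)]])
  finally have eq: "integral {0..b-x} (\<lambda>t. exp (- s * t) * ((U (x + t) - V (x + t)) - (U x - V x))) = integral {0..b-x} (\<lambda>t. exp (- s * t) * (U (x + t) - U x)) - integral {0..b-x} (\<lambda>t. exp (- s * t) * (V (x + t) - V x))" .
  show ?thesis unfolding laplace_right_def eq by (rule right_diff_distrib)
qed

lemma tE_has_integral:
  fixes s \<delta> :: real
  assumes "s > 0" "\<delta> \<ge> 0"
  shows "((\<lambda>t. exp (- s * t) * t) has_integral (1 - exp (- s * \<delta>) * (1 + s * \<delta>)) / s\<^sup>2) {0..\<delta>}"
proof -
  define \<phi> where "\<phi> t = - exp (- s * t) * (s * t + 1) / s\<^sup>2" for t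
  have d: "(\<phi> has_vector_derivative exp (- s * t) * t) (at t within {0..\<delta>})" for t
    unfolding \<phi>_def has_real_derivative_iff_has_vector_derivative[symmetric]
    using assms(1) apply -
    apply (rule derivative_eq_intros refl)+
    apply (simp add: power2_eq_square)
    apply (simp add: divide_simps)
    apply (simp add: algebra_simps eval_nat_numeral)
    done
  have "((\<lambda>t. exp (- s * t) * t) has_integral (\<phi> \<delta> - \<phi> 0)) {0..\<delta>}"
    by (rule fundamental_theorem_of_calculus) (use assms d in auto)
  also have "\<phi> \<delta> - \<phi> 0 = (1 - exp (- s * \<delta>) * (1 + s * \<delta>)) / s\<^sup>2"
    unfolding \<phi>_def using assms by (simp add: field_simps)
  finally show ?thesis .
qed

lemma tE_limit:
  fixes \<delta> :: real
  assumes "\<delta> > 0"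
  shows "((\<lambda>s. s\<^sup>2 * integral {0..\<delta>} (\<lambda>t. exp (- s * t) * t)) \<longlongrightarrow> 1) at_top"
proof -
  have ev: "eventually (\<lambda>s. 1 - exp (- s * \<delta>) * (1 + s * \<delta>) = s\<^sup>2 * integral {0..\<delta>} (\<lambda>t. exp (- s * t) * t)) at_top"
    using eventually_gt_at_top[of 0]
  proof eventually_elim
    case (elim s)
    then show ?case using integral_unique[OF tE_has_integral[OF elim, of \<delta>]] assms by simp
  qed
  have "((\<lambda>s. 1 - exp (- s * \<delta>) * (1 + s * \<delta>)) \<longlongrightarrow> 1) at_top"
    using assms by real_asymp
  then show ?thesis using ev by (rule Lim_transform_eventually)
qed



lemma cont_bound:
  fixes F :: "real \<Rightarrow> real"
  assumes "continuous_on {a..b} F"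
  obtains M where "\<And>y. y \<in> {a..b} \<Longrightarrow> \<bar>F y\<bar> \<le> M" "M \<ge> 0"
proof -
  have "bounded (F ` {a..b})"
    by (rule compact_imp_bounded[OF compact_continuous_image[OF assms compact_Icc]])
  then obtain M where M0: "\<forall>y\<in>{a..b}. \<bar>F y\<bar> \<le> M"
    unfolding bounded_iff by auto
  have M: "\<bar>F y\<bar> \<le> M" if "y \<in> {a..b}" for y using M0 that by blast
  show ?thesis
  proof (rule that[of "max M 0"])
    show "y \<in> {a..b} \<Longrightarrow> \<bar>F y\<bar> \<le> max M 0" for y using M[of y] by auto
  qed simp
qed

lemma lr_localize:
  fixes F :: "real \<Rightarrow> real"
  assumes cont: "continuous_on {a..b} F" and ax: "a \<le> x" and xd: "x < d" and db: "d \<le> b"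
    and mx: "\<And>y. y \<in> {x..d} \<Longrightarrow> F y \<le> F x"
  shows "Limsup at_top (\<lambda>s. ereal (laplace_right F x (b - x) s)) \<le> 0"
proof -
  obtain M where M: "\<And>y. y \<in> {a..b} \<Longrightarrow> \<bar>F y\<bar> \<le> M" "M \<ge> 0"
    using cont_bound[OF cont] by blast
  define B where "B s = ((b - d) * (2*M)) * (s\<^sup>2 * exp (- s * (d - x)))" for s
  have bound: "laplace_right F x (b - x) s \<le> B s" if s0: "s \<ge> 0" for s
  proof -
    let ?g = "\<lambda>t. exp (- s * t) * (F (x + t) - F x)"
    have int: "?g integrable_on {0..b-x}" by (rule lr_integrable) (use assms in auto)
    have split: "integral {0..d-x} ?g + integral {d-x..b-x} ?g = integral {0..b-x} ?g"
      by (rule Henstock_Kurzweil_Integration.integral_combine) (use assms int in auto)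
    have i1: "integral {0..d-x} ?g \<le> 0"
    proof -
      have "integral {0..d-x} ?g \<le> integral {0..d-x} (\<lambda>t. 0::real)"
      proof (rule integral_le)
        show "?g integrable_on {0..d-x}"
          by (rule integrable_subinterval_real[OF int]) (use assms in auto)
        show "?g t \<le> 0" if "t \<in> {0..d-x}" for t
        proof -
          have "F (x + t) \<le> F x" using mx[of "x+t"] that by auto
          then show ?thesis by (simp add: mult_nonneg_nonpos)
        qed
      qed (simp add: integrable_0)
      then show ?thesis by simp
    qed
    have i2: "integral {d-x..b-x} ?g \<le> integral {d-x..b-x} (\<lambda>t. exp (- s * (d - x)) * (2*M))"
    proof (rule integral_le)
      show "?g integrable_on {d-x..b-x}"
        by (rule integrable_subinterval_real[OF int]) (use assms in auto)
      show "?g t \<le> exp (- s * (d - x)) * (2*M)" if t: "t \<in> {d-x..b-x}" for t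
      proof -
        have "\<bar>F (x + t)\<bar> \<le> M" "\<bar>F x\<bar> \<le> M" using M(1)[of "x+t"] M(1)[of x] t assms by auto
        then have h1: "F (x + t) - F x \<le> 2*M" by linarith
        have h2: "exp (- s * t) \<le> exp (- s * (d - x))" using t s0 by (auto intro: mult_left_mono)
        have "?g t \<le> exp (- s * t) * (2*M)" using h1 by (intro mult_left_mono) auto
        also have "\<dots> \<le> exp (- s * (d - x)) * (2*M)" using h2 M(2) by (intro mult_right_mono) auto
        finally show ?thesis .
      qed
    qed (simp add: integrable_const_ivl)
    have ic: "integral {d-x..b-x} (\<lambda>t. exp (- s * (d - x)) * (2*M)) = (b - d) * (exp (- s * (d - x)) * (2*M))"
      using db by simp
    have "integral {0..b-x} ?g \<le> (b - d) * (exp (- s * (d - x)) * (2*M))"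
      using split i1 i2 ic by linarith
    then have "s\<^sup>2 * integral {0..b-x} ?g \<le> s\<^sup>2 * ((b - d) * (exp (- s * (d - x)) * (2*M)))"
      by (intro mult_left_mono) auto
    then show ?thesis unfolding laplace_right_def B_def by (simp add: algebra_simps)
  qed
  have "((\<lambda>s. s\<^sup>2 * exp (- s * (d - x))) \<longlongrightarrow> 0) at_top"
    using xd by real_asymp
  then have lim: "(B \<longlongrightarrow> 0) at_top"
    unfolding B_def using tendsto_mult_right_zero by blast
  show ?thesis
    unfolding Limsup_le_iff
  proof (intro allI impI)
    fix y :: ereal assume y: "y > 0"
    show "\<forall>\<^sub>F s in at_top. ereal (laplace_right F x (b - x) s) < y"
    proof (cases y)
      case (real r)
      then have "r > 0" using y by simp
      have "\<forall>\<^sub>F s in at_top. B s < r" using order_tendstoD(2)[OF lim \<open>r > 0\<close>] .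
      then show ?thesis using eventually_ge_at_top[of "0::real"]
        by eventually_elim (use bound real in force)
    qed (use y in auto)
  qed
qed

lemma strict_mono_from_pos:
  fixes F :: "real \<Rightarrow> real"
  assumes cont: "continuous_on {a..b} F"
    and pos: "\<And>x. x \<in> {a..<b} \<Longrightarrow> Liminf at_top (\<lambda>s. ereal (laplace_right F x (b - x) s)) > 0"
    and ac: "a \<le> c" and cd: "c < d" and db: "d \<le> b"
  shows "F c < F d"
proof (rule ccontr)
  assume "\<not> F c < F d"
  then have le: "F d \<le> F c" by simp
  have "continuous_on {c..d} F" using continuous_on_subset[OF cont] ac db by auto
  then obtain x0 where x0: "x0 \<in> {c..d}" "\<And>y. y \<in> {c..d} \<Longrightarrow> F y \<le> F x0"
    using continuous_attains_sup[of "{c..d}" F] cd by auto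
  define x1 where "x1 = (if F c = F x0 then c else x0)"
  have x1a: "x1 \<in> {c..<d}"
  proof (cases "F c = F x0")
    case True then show ?thesis using cd by (simp add: x1_def)
  next
    case False
    have "F c \<le> F x0" using x0(2)[of c] cd by auto
    with False le have "x0 \<noteq> d" by auto
    then show ?thesis using x0(1) False by (auto simp: x1_def)
  qed
  have x1b: "F y \<le> F x1" if "y \<in> {c..d}" for y
    using x0(2)[OF that] by (auto simp: x1_def)
  have "Limsup at_top (\<lambda>s. ereal (laplace_right F x1 (b - x1) s)) \<le> 0"
    by (rule lr_localize[OF cont, of x1 d]) (use x1a x1b ac db in auto)
  moreover have "Liminf at_top (\<lambda>s. ereal (laplace_right F x1 (b - x1) s)) \<le> Limsup at_top (\<lambda>s. ereal (laplace_right F x1 (b - x1) s))"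
    by (rule Liminf_le_Limsup) simp
  moreover have "Liminf at_top (\<lambda>s. ereal (laplace_right F x1 (b - x1) s)) > 0"
    using pos[of x1] x1a ac db by auto
  ultimately show False by simp
qed

lemma lr_add_linear:
  fixes F :: "real \<Rightarrow> real"
  assumes cont: "continuous_on {a..b} F" and "a \<le> x" "x \<le> b"
  shows "laplace_right (\<lambda>y. F y + e * y) x (b - x) s =
         laplace_right F x (b - x) s + e * (s\<^sup>2 * integral {0..b - x} (\<lambda>t. exp (- s * t) * t))"
proof -
  have i2: "(\<lambda>t. exp (- s * t) * t) integrable_on {0..b-x}"
    by (intro integrable_continuous_interval continuous_intros)
  have i3: "(\<lambda>t. e * (exp (- s * t) * t)) integrable_on {0..b-x}"
    by (intro integrable_continuous_interval continuous_intros)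
  have "integral {0..b-x} (\<lambda>t. exp (- s * t) * ((F (x + t) + e * (x + t)) - (F x + e * x))) =
        integral {0..b-x} (\<lambda>t. exp (- s * t) * (F (x + t) - F x) + e * (exp (- s * t) * t))"
    by (rule integral_cong) (simp add: algebra_simps)
  also have "\<dots> = integral {0..b-x} (\<lambda>t. exp (- s * t) * (F (x + t) - F x)) + e * integral {0..b-x} (\<lambda>t. exp (- s * t) * t)"
    using integral_add[OF lr_integrable[OF assms] i3] by (simp add: integral_mult_right)
  finally show ?thesis unfolding laplace_right_def by (simp add: algebra_simps)
qed

lemma mono_from_nonneg:
  fixes F :: "real \<Rightarrow> real"
  assumes cont: "continuous_on {a..b} F"
    and nn: "\<And>x. x \<in> {a..<b} \<Longrightarrow> Liminf at_top (\<lambda>s. ereal (laplace_right F x (b - x) s)) \<ge> 0"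
    and ac: "a \<le> c" and cd: "c \<le> d" and db: "d \<le> b"
  shows "F c \<le> F d"
proof (rule ccontr)
  assume "\<not> F c \<le> F d"
  then have lt: "F d < F c" by simp
  then have cd': "c < d" using cd by (cases "c = d") auto
  define e where "e = (F c - F d) / (d - c)"
  have e: "e > 0" using lt cd' by (simp add: e_def)
  define G where "G y = F y + e * y" for y
  have contG: "continuous_on {a..b} G" unfolding G_def by (intro continuous_intros cont)
  have posG: "Liminf at_top (\<lambda>s. ereal (laplace_right G x (b - x) s)) > 0" if x: "x \<in> {a..<b}" for x
  proof -
    have "ereal (e/2) \<le> Liminf at_top (\<lambda>s. ereal (laplace_right G x (b - x) s))"
      unfolding le_Liminf_iff
    proof (intro allI impI)
      fix y :: ereal assume y: "y < ereal (e/2)"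
      show "\<forall>\<^sub>F s in at_top. y < ereal (laplace_right G x (b - x) s)"
      proof (cases y)
        case (real r)
        have "ereal (r - e/2) < 0" using y real by simp
        then have ev1: "\<forall>\<^sub>F s in at_top. ereal (r - e/2) < ereal (laplace_right F x (b - x) s)"
          using nn[OF x] unfolding le_Liminf_iff by blast
        have "((\<lambda>s. s\<^sup>2 * integral {0..b - x} (\<lambda>t. exp (- s * t) * t)) \<longlongrightarrow> 1) at_top"
          by (rule tE_limit) (use x in auto)
        then have ev2: "\<forall>\<^sub>F s in at_top. s\<^sup>2 * integral {0..b - x} (\<lambda>t. exp (- s * t) * t) > 1/2"
          by (rule order_tendstoD) simp
        show ?thesis using ev1 ev2
        proof eventually_elim
          case (elim s)
          have "e * (1/2) < e * (s\<^sup>2 * integral {0..b - x} (\<lambda>t. exp (- s * t) * t))"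
            using elim(2) e by (intro mult_strict_left_mono) auto
          then show ?case using elim(1) real x
            unfolding G_def by (simp add: lr_add_linear[OF cont])
        qed
      qed (use y in auto)
    qed
    moreover have "(0::ereal) < ereal (e/2)" using e by simp
    ultimately show ?thesis by (meson order.strict_trans2)
  qed
  have "G c < G d" by (rule strict_mono_from_pos[OF contG posG ac cd' db])
  then have "F c - F d < e * (d - c)" unfolding G_def by (simp add: algebra_simps)
  also have "e * (d - c) = F c - F d" using cd' by (simp add: e_def)
  finally show False by simp
qed



definition clampf :: "real \<Rightarrow> real \<Rightarrow> (real \<Rightarrow> real) \<Rightarrow> real \<Rightarrow> real" where
  "clampf a b F y = F (max a (min b y))"

lemma clampf_cont:
  assumes "a \<le> b" "continuous_on {a..b} F"
  shows "continuous_on UNIV (clampf a b F)"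
  unfolding clampf_def
  by (rule continuous_on_compose2[OF assms(2)]) (use assms(1) in \<open>auto intro!: continuous_intros\<close>)

lemma clampf_eq: "y \<in> {a..b} \<Longrightarrow> clampf a b F y = F y"
  by (simp add: clampf_def)

lemma clampf_mono:
  assumes "a \<le> b" "\<And>c d. a \<le> c \<Longrightarrow> c \<le> d \<Longrightarrow> d \<le> b \<Longrightarrow> F c \<le> F d" "y \<le> z"
  shows "clampf a b F y \<le> clampf a b F z"
  unfolding clampf_def by (rule assms(2)) (use assms in auto)

definition Qf :: "real \<Rightarrow> real \<Rightarrow> (real \<Rightarrow> real) \<Rightarrow> real \<Rightarrow> real \<Rightarrow> real" where
  "Qf a b F k x = k\<^sup>2 * integral {0..b-a} (\<lambda>t. exp (- k * t) * (clampf a b F (x + t) - clampf a b F x))"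

lemma Qf_cont:
  assumes "a \<le> b" "continuous_on {a..b} F"
  shows "continuous_on UNIV (Qf a b F k)"
proof -
  have Fc: "continuous_on UNIV (clampf a b F)" by (rule clampf_cont[OF assms])
  have "continuous_on (UNIV \<times> cbox 0 (b-a)) (\<lambda>(x, t). exp (- k * t) * (clampf a b F (x + t) - clampf a b F x))"
    by (auto simp: split_beta intro!: continuous_intros continuous_on_compose2[OF Fc])
  then have "continuous_on UNIV (\<lambda>x. integral (cbox 0 (b-a)) (\<lambda>t. exp (- k * t) * (clampf a b F (x + t) - clampf a b F x)))"
    by (rule integral_continuous_on_param)
  then show ?thesis unfolding Qf_def by (intro continuous_intros) simp
qed

lemma Qf_integrand_integrable:
  assumes "a \<le> b" "continuous_on {a..b} F"
  shows "(\<lambda>t. exp (- k * t) * (clampf a b F (x + t) - clampf a b F x)) integrable_on {p..q}"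
proof -
  have Fc: "continuous_on UNIV (clampf a b F)" by (rule clampf_cont[OF assms])
  show ?thesis
    by (intro integrable_continuous_interval continuous_intros continuous_on_compose2[OF Fc]) auto
qed

lemma lr_le_Qf:
  assumes ab: "a \<le> b" and cont: "continuous_on {a..b} F"
    and mono: "\<And>c d. a \<le> c \<Longrightarrow> c \<le> d \<Longrightarrow> d \<le> b \<Longrightarrow> F c \<le> F d"
    and x: "a \<le> x" "x \<le> b"
  shows "0 \<le> laplace_right F x (b - x) k" "laplace_right F x (b - x) k \<le> Qf a b F k x"
proof -
  let ?g = "\<lambda>t. exp (- k * t) * (clampf a b F (x + t) - clampf a b F x)"
  have gnn: "0 \<le> ?g t" if "t \<ge> 0" for t
    using clampf_mono[OF ab mono, where y=x and z="x+t"] that by auto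
  have eq: "integral {0..b-x} (\<lambda>t. exp (- k * t) * (F (x + t) - F x)) = integral {0..b-x} ?g"
    by (rule integral_cong) (use x in \<open>auto simp: clampf_eq\<close>)
  have int: "?g integrable_on {0..b-a}" by (rule Qf_integrand_integrable[OF ab cont])
  have split: "integral {0..b-x} ?g + integral {b-x..b-a} ?g = integral {0..b-a} ?g"
    by (rule Henstock_Kurzweil_Integration.integral_combine) (use x int in auto)
  have n1: "0 \<le> integral {0..b-x} ?g"
    by (rule Henstock_Kurzweil_Integration.integral_nonneg[OF Qf_integrand_integrable[OF ab cont]]) (use gnn in auto)
  have n2: "0 \<le> integral {b-x..b-a} ?g"
    by (rule Henstock_Kurzweil_Integration.integral_nonneg[OF Qf_integrand_integrable[OF ab cont]]) (use gnn x in auto)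
  show "0 \<le> laplace_right F x (b - x) k"
    unfolding laplace_right_def eq using n1 by simp
  have "integral {0..b-x} ?g \<le> integral {0..b-a} ?g" using split n2 by linarith
  then show "laplace_right F x (b - x) k \<le> Qf a b F k x"
    unfolding laplace_right_def eq Qf_def by (intro mult_left_mono) auto
qed

lemma Qf_nonneg:
  assumes ab: "a \<le> b" and cont: "continuous_on {a..b} F"
    and mono: "\<And>c d. a \<le> c \<Longrightarrow> c \<le> d \<Longrightarrow> d \<le> b \<Longrightarrow> F c \<le> F d"
  shows "0 \<le> Qf a b F k x"
proof -
  have "0 \<le> integral {0..b-a} (\<lambda>t. exp (- k * t) * (clampf a b F (x + t) - clampf a b F x))"
    by (rule Henstock_Kurzweil_Integration.integral_nonneg[OF Qf_integrand_integrable[OF ab cont]])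
       (use clampf_mono[OF ab mono] in auto)
  then show ?thesis unfolding Qf_def by simp
qed



lemma Qf_int_bound:
  assumes ab: "a < b" and cont: "continuous_on {a..b} F"
    and mono: "\<And>c d. a \<le> c \<Longrightarrow> c \<le> d \<Longrightarrow> d \<le> b \<Longrightarrow> F c \<le> F d"
    and k: "k \<ge> 0"
  shows "integral {a..b} (Qf a b F k) \<le> F b - F a"
proof -
  define W where "W = clampf a b F"
  define T where "T = b - a"
  define g where "g x t = exp (- k * t) * (W (x + t) - W x)" for x t
  have Wc: "continuous_on UNIV W" unfolding W_def by (rule clampf_cont) (use ab cont in auto)
  have FbFa: "F a \<le> F b" using mono[of a b] ab by auto
  have T0: "T \<ge> 0" using ab by (simp add: T_def)
  have cont2: "continuous_on (cbox (a,0) (b,T)) (\<lambda>(x,t). g x t)"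
    unfolding g_def by (auto simp: split_beta intro!: continuous_intros continuous_on_compose2[OF Wc])
  have swap: "integral (cbox a b) (\<lambda>x. integral (cbox 0 T) (g x)) = integral (cbox 0 T) (\<lambda>t. integral (cbox a b) (\<lambda>x. g x t))"
    by (rule integral_swap_continuous[OF cont2])
  have Qeq: "integral {a..b} (Qf a b F k) = k\<^sup>2 * integral {0..T} (\<lambda>t. integral {a..b} (\<lambda>x. g x t))"
  proof -
    have "integral {a..b} (Qf a b F k) = integral {a..b} (\<lambda>x. k\<^sup>2 * integral {0..T} (g x))"
      unfolding Qf_def g_def W_def T_def ..
    also have "\<dots> = k\<^sup>2 * integral {a..b} (\<lambda>x. integral {0..T} (g x))" by simp
    also have "\<dots> = k\<^sup>2 * integral {0..T} (\<lambda>t. integral {a..b} (\<lambda>x. g x t))"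
      using swap by simp
    finally show ?thesis .
  qed
  have inner: "integral {a..b} (\<lambda>x. g x t) \<le> (F b - F a) * (exp (- k * t) * t)" if t: "t \<in> {0..T}" for t
  proof -
    have t0: "t \<ge> 0" using t by simp
    have iW: "W integrable_on {p..q}" for p q by (rule integrable_continuous_interval) (use Wc continuous_on_subset in blast)
    have iWs: "(\<lambda>x. W (x + t)) integrable_on {a..b}"
      by (intro integrable_continuous_interval continuous_on_compose2[OF Wc] continuous_intros) auto
    have e1: "integral {a..b} (\<lambda>x. g x t) = exp (- k * t) * (integral {a..b} (\<lambda>x. W (x + t)) - integral {a..b} W)"
      unfolding g_def by (simp add: integral_diff[OF iWs iW])
    have sh: "integral {a..b} (\<lambda>x. W (x + t)) = integral {a+t..b+t} W"
    proof -
      have "(\<lambda>x. W (x + t)) = W \<circ> (+) t" by (auto simp: add.commute)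
      then show ?thesis using integral_shift_Icc_real[of a b W t] by (simp add: add.commute)
    qed
    have c1: "integral {a..a+t} W + integral {a+t..b+t} W = integral {a..b+t} W"
      by (rule Henstock_Kurzweil_Integration.integral_combine) (use t0 ab iW in auto)
    have c2: "integral {a..b} W + integral {b..b+t} W = integral {a..b+t} W"
      by (rule Henstock_Kurzweil_Integration.integral_combine) (use t0 ab iW in auto)
    have Ib: "integral {b..b+t} W = t * F b"
    proof -
      have "integral {b..b+t} W = integral {b..b+t} (\<lambda>y. F b)"
        by (rule integral_cong) (use ab in \<open>auto simp: W_def clampf_def\<close>)
      then show ?thesis using t0 by simp
    qed
    have Ia: "t * F a \<le> integral {a..a+t} W"
    proof -
      have "integral {a..a+t} (\<lambda>y. F a) \<le> integral {a..a+t} W"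
        by (rule integral_le) (use iW ab mono in \<open>auto simp: W_def clampf_def\<close>)
      then show ?thesis using t0 by simp
    qed
    have "integral {a..b} (\<lambda>x. W (x + t)) - integral {a..b} W \<le> t * (F b - F a)"
      using sh c1 c2 Ib Ia by (simp add: algebra_simps)
    then have "exp (- k * t) * (integral {a..b} (\<lambda>x. W (x + t)) - integral {a..b} W) \<le> exp (- k * t) * (t * (F b - F a))"
      by (intro mult_left_mono) auto
    then show ?thesis using e1 by (simp add: algebra_simps)
  qed
  have icont: "continuous_on {0..T} (\<lambda>t. integral (cbox a b) (\<lambda>x. g x t))"
  proof -
    have "continuous_on ({0..T} \<times> cbox a b) (\<lambda>(t, x). g x t)"
      unfolding g_def by (auto simp: split_beta intro!: continuous_intros continuous_on_compose2[OF Wc])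
    then show ?thesis by (rule integral_continuous_on_param)
  qed
  have i1: "(\<lambda>t. integral {a..b} (\<lambda>x. g x t)) integrable_on {0..T}"
    using integrable_continuous_interval[OF icont] by simp
  have i2: "(\<lambda>t. (F b - F a) * (exp (- k * t) * t)) integrable_on {0..T}"
    by (intro integrable_continuous_interval continuous_intros)
  have "integral {0..T} (\<lambda>t. integral {a..b} (\<lambda>x. g x t)) \<le> integral {0..T} (\<lambda>t. (F b - F a) * (exp (- k * t) * t))"
    by (rule integral_le[OF i1 i2 inner])
  also have "\<dots> = (F b - F a) * integral {0..T} (\<lambda>t. exp (- k * t) * t)" by simp
  finally have le1: "integral {0..T} (\<lambda>t. integral {a..b} (\<lambda>x. g x t)) \<le> (F b - F a) * integral {0..T} (\<lambda>t. exp (- k * t) * t)" .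
  have "integral {a..b} (Qf a b F k) \<le> k\<^sup>2 * ((F b - F a) * integral {0..T} (\<lambda>t. exp (- k * t) * t))"
    unfolding Qeq by (rule mult_left_mono[OF le1]) simp
  also have "\<dots> \<le> F b - F a"
  proof (cases "k = 0")
    case True then show ?thesis using FbFa by simp
  next
    case False
    then have kp: "k > 0" using k by simp
    have "integral {0..T} (\<lambda>t. exp (- k * t) * t) = (1 - exp (- k * T) * (1 + k * T)) / k\<^sup>2"
      using integral_unique[OF tE_has_integral[OF kp T0]] .
    then have hI: "k\<^sup>2 * integral {0..T} (\<lambda>t. exp (- k * t) * t) = 1 - exp (- k * T) * (1 + k * T)"
      using kp by simp
    have "k\<^sup>2 * ((F b - F a) * integral {0..T} (\<lambda>t. exp (- k * t) * t)) = (F b - F a) * (k\<^sup>2 * integral {0..T} (\<lambda>t. exp (- k * t) * t))"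
      by (simp only: mult.assoc mult.left_commute)
    also have "\<dots> = (F b - F a) * (1 - exp (- k * T) * (1 + k * T))" by (simp only: hI)
    also have "\<dots> \<le> (F b - F a) * 1"
      using FbFa kp T0 by (intro mult_left_mono) auto
    finally show ?thesis by simp
  qed
  finally show ?thesis .
qed

lemma integral_subst01:
  fixes g :: "real \<Rightarrow> real"
  assumes d: "\<delta> \<ge> 0" and int: "g integrable_on {0..\<delta>}"
  shows "integral {0..\<delta>} g = \<delta> * integral {0..1} (\<lambda>u. g (\<delta> * u))"
proof (cases "\<delta> = 0")
  case True then show ?thesis by simp
next
  case False
  then have dp: "\<delta> > 0" using d by simp
  have "(g has_integral integral {0..\<delta>} g) (cbox 0 \<delta>)" using int by (simp add: integrable_integral)
  from has_integral_affinity'[OF this dp, of 0]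
  have "((\<lambda>u. g (\<delta> * u)) has_integral (integral {0..\<delta>} g / \<delta>)) {0..1}"
    using dp by (simp add: divide_simps)
  then have "integral {0..1} (\<lambda>u. g (\<delta> * u)) = integral {0..\<delta>} g / \<delta>" by (rule integral_unique)
  then show ?thesis using dp by simp
qed

lemma lr_cont:
  assumes ab: "a \<le> b" and cont: "continuous_on {a..b} F"
  shows "continuous_on {a..b} (\<lambda>x. laplace_right F x (b - x) k)"
proof -
  define W where "W = clampf a b F"
  have Wc: "continuous_on UNIV W" unfolding W_def by (rule clampf_cont[OF ab cont])
  define R where "R x = k\<^sup>2 * ((b - x) * integral (cbox 0 1) (\<lambda>u. exp (- k * ((b - x) * u)) * (W (x + (b - x) * u) - W x)))" for x
  have Rc: "continuous_on UNIV R"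
  proof -
    have "continuous_on (UNIV \<times> cbox 0 1) (\<lambda>(x, u). exp (- k * ((b - x) * u)) * (W (x + (b - x) * u) - W x))"
      by (auto simp: split_beta intro!: continuous_intros continuous_on_compose2[OF Wc])
    then have "continuous_on UNIV (\<lambda>x. integral (cbox 0 1) (\<lambda>u. exp (- k * ((b - x) * u)) * (W (x + (b - x) * u) - W x)))"
      by (rule integral_continuous_on_param)
    then show ?thesis unfolding R_def by (intro continuous_intros)
  qed
  have eq: "laplace_right F x (b - x) k = R x" if x: "x \<in> {a..b}" for x
  proof -
    have "integral {0..b-x} (\<lambda>t. exp (- k * t) * (F (x + t) - F x)) = integral {0..b-x} (\<lambda>t. exp (- k * t) * (W (x + t) - W x))"
      by (rule integral_cong) (use x in \<open>auto simp: W_def clampf_eq\<close>)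
    also have "\<dots> = (b - x) * integral {0..1} (\<lambda>u. exp (- k * ((b - x) * u)) * (W (x + (b - x) * u) - W x))"
      by (rule integral_subst01) (use x Qf_integrand_integrable[OF ab cont] in \<open>auto simp: W_def\<close>)
    finally show ?thesis unfolding laplace_right_def R_def by simp
  qed
  show ?thesis
    by (rule continuous_on_cong[THEN iffD2, OF refl _ continuous_on_subset[OF Rc]]) (use eq in auto)
qed



lemma seq_at_top: "filterlim (\<lambda>n. real (Suc n)) at_top sequentially"
  using filterlim_real_sequentially filterlim_sequentially_Suc[of "\<lambda>n. real n"] by simp

lemma ev_seq: "eventually P at_top \<Longrightarrow> eventually (\<lambda>n. P (real (Suc n))) sequentially"
  using seq_at_top unfolding filterlim_iff by blast

lemma seq_liminf_ge:
  fixes \<phi> :: "real \<Rightarrow> ereal"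
  shows "Liminf at_top \<phi> \<le> liminf (\<lambda>n. \<phi> (real (Suc n)))"
  unfolding le_Liminf_iff
proof (intro allI impI)
  fix y assume "y < Liminf at_top \<phi>"
  then have "eventually (\<lambda>s. y < \<phi> s) at_top" using le_Liminf_iff by blast
  then show "eventually (\<lambda>n. y < \<phi> (real (Suc n))) sequentially" by (rule ev_seq)
qed

lemma seq_limsup_le:
  fixes \<phi> :: "real \<Rightarrow> ereal"
  shows "limsup (\<lambda>n. \<phi> (real (Suc n))) \<le> Limsup at_top \<phi>"
  unfolding Limsup_le_iff
proof (intro allI impI)
  fix y assume "y > Limsup at_top \<phi>"
  then have "eventually (\<lambda>s. y > \<phi> s) at_top" using Limsup_le_iff by blast
  then show "eventually (\<lambda>n. y > \<phi> (real (Suc n))) sequentially" by (rule ev_seq)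
qed

lemma lower_LD_le:
  assumes "x \<in> {a..<b}"
  shows "lower_LD a b F x \<le> Liminf at_top (\<lambda>s. ereal (laplace_right F x (b - x) s))"
  using assms unfolding lower_LD_def by auto

lemma upper_LD_ge:
  assumes "x \<in> {a..<b}"
  shows "Limsup at_top (\<lambda>s. ereal (laplace_right F x (b - x) s)) \<le> upper_LD a b F x"
  using assms unfolding upper_LD_def by auto

lemma major_liminf:
  assumes "laplace_major a b f U" "x \<in> {a..<b}"
  shows "ereal (f x) \<le> Liminf at_top (\<lambda>s. ereal (laplace_right U x (b - x) s))"
  using assms lower_LD_le[OF assms(2), of U] unfolding laplace_major_def by force

lemma minor_limsup:
  assumes "laplace_minor a b f V" "x \<in> {a..<b}"
  shows "Limsup at_top (\<lambda>s. ereal (laplace_right V x (b - x) s)) \<le> ereal (f x)"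
  using assms upper_LD_ge[OF assms(2), of V] unfolding laplace_minor_def by force

lemma major_minor_mono:
  assumes U: "laplace_major a b f U" and V: "laplace_minor a b f V"
    and ac: "a \<le> c" and cd: "c \<le> d" and db: "d \<le> b"
  shows "U c - V c \<le> U d - V d"
proof -
  have Uc: "continuous_on {a..b} U" and Vc: "continuous_on {a..b} V"
    using U V unfolding laplace_major_def laplace_minor_def by auto
  have "(\<lambda>y. U y - V y) c \<le> (\<lambda>y. U y - V y) d"
  proof (rule mono_from_nonneg[OF _ _ ac cd db])
    show "continuous_on {a..b} (\<lambda>y. U y - V y)" by (intro continuous_intros Uc Vc)
    fix x assume x: "x \<in> {a..<b}"
    have hU: "ereal (f x) \<le> Liminf at_top (\<lambda>s. ereal (laplace_right U x (b - x) s))"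
      by (rule major_liminf[OF U x])
    have hV: "Limsup at_top (\<lambda>s. ereal (laplace_right V x (b - x) s)) \<le> ereal (f x)"
      by (rule minor_limsup[OF V x])
    show "0 \<le> Liminf at_top (\<lambda>s. ereal (laplace_right (\<lambda>y. U y - V y) x (b - x) s))"
      unfolding le_Liminf_iff
    proof (intro allI impI)
      fix y :: ereal assume y: "y < 0"
      show "\<forall>\<^sub>F s in at_top. y < ereal (laplace_right (\<lambda>y. U y - V y) x (b - x) s)"
      proof (cases y)
        case (real r)
        then have r: "r < 0" using y by simp
        have "ereal (f x + r/2) < ereal (f x)" using r by simp
        then have ev1: "\<forall>\<^sub>F s in at_top. ereal (f x + r/2) < ereal (laplace_right U x (b - x) s)"
          using hU unfolding le_Liminf_iff by (meson order.strict_trans2)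
        have "ereal (f x - r/2) > ereal (f x)" using r by simp
        then have ev2: "\<forall>\<^sub>F s in at_top. ereal (f x - r/2) > ereal (laplace_right V x (b - x) s)"
          using hV unfolding Limsup_le_iff by (meson order.strict_trans1)
        show ?thesis using ev1 ev2
        proof eventually_elim
          case (elim s)
          then show ?case using real x by (simp add: lr_diff[OF Uc Vc])
        qed
      qed (use y in auto)
    qed
  qed
  then show ?thesis by simp
qed



theorem corollary5p6:
  fixes f :: "real \<Rightarrow> real" and a b :: real
  assumes "a < b"
    and "laplace_integrable f a b"
  shows "f \<in> borel_measurable (lebesgue_on {a..b})"
proof -
  note ab = assms(1)
  define lo where "lo = Sup {ereal (V b - V a) | V. laplace_minor a b f V}"
  define up where "up = Inf {ereal (U b - U a) | U. laplace_major a b f U}"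
  have eq: "lo = up" and fin: "\<bar>lo\<bar> \<noteq> \<infinity>"
    using assms(2) unfolding laplace_integrable_def lo_def up_def Let_def by auto
  obtain I where I: "lo = ereal I" using fin by (cases lo) auto
  have gap: "\<exists>U V. laplace_major a b f U \<and> laplace_minor a b f V \<and> (U b - U a) - (V b - V a) < e"
    if e: "e > 0" for e
  proof -
    have "ereal (I - e/2) < lo" using I e by simp
    then obtain V where V: "laplace_minor a b f V" "ereal (I - e/2) < ereal (V b - V a)"
      unfolding lo_def less_Sup_iff by auto
    have "up < ereal (I + e/2)" using I eq e by simp
    then obtain U where U: "laplace_major a b f U" "ereal (U b - U a) < ereal (I + e/2)"
      unfolding up_def Inf_less_iff by auto
    show ?thesis using U V by (intro exI[of _ U] exI[of _ V]) auto
  qed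
  have "\<forall>n. \<exists>UV. laplace_major a b f (fst UV) \<and> laplace_minor a b f (snd UV) \<and>
          (fst UV b - fst UV a) - (snd UV b - snd UV a) < 1 / real (Suc n)"
  proof
    fix n
    obtain U V where "laplace_major a b f U" "laplace_minor a b f V" "(U b - U a) - (V b - V a) < 1 / real (Suc n)"
      using gap[of "1 / real (Suc n)"] by auto
    then show "\<exists>UV. laplace_major a b f (fst UV) \<and> laplace_minor a b f (snd UV) \<and>
          (fst UV b - fst UV a) - (snd UV b - snd UV a) < 1 / real (Suc n)"
      by (intro exI[of _ "(U, V)"]) auto
  qed
  from choice[OF this] obtain UV where UV: "\<And>n. laplace_major a b f (fst (UV n)) \<and> laplace_minor a b f (snd (UV n)) \<and>
          (fst (UV n) b - fst (UV n) a) - (snd (UV n) b - snd (UV n) a) < 1 / real (Suc n)"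
    by blast
  define U where "U n = fst (UV n)" for n
  define V where "V n = snd (UV n)" for n
  define W where "W n = (\<lambda>y. U n y - V n y)" for n
  have Um: "laplace_major a b f (U n)" and Vm: "laplace_minor a b f (V n)" for n
    using UV unfolding U_def V_def by auto
  have Uc: "continuous_on {a..b} (U n)" and Vc: "continuous_on {a..b} (V n)" for n
    using Um Vm unfolding laplace_major_def laplace_minor_def by auto
  have Wc: "continuous_on {a..b} (W n)" for n
    unfolding W_def by (intro continuous_intros Uc Vc)
  have Wmono: "W n c \<le> W n d" if "a \<le> c" "c \<le> d" "d \<le> b" for n c d
    unfolding W_def by (rule major_minor_mono[OF Um Vm that])
  have Wgap: "W n b - W n a < 1 / real (Suc n)" for n
    using UV[of n] unfolding W_def U_def V_def by simp
  define cl where "cl x = max a (min b x)" for x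
  have cl_in: "cl x \<in> {a..b}" for x using ab by (auto simp: cl_def)
  have cl_id: "x \<in> {a..b} \<Longrightarrow> cl x = x" for x by (auto simp: cl_def)
  have cl_cont: "continuous_on UNIV cl" unfolding cl_def by (intro continuous_intros)
  define gf where "gf n x = limsup (\<lambda>k. ereal (laplace_right (V n) (cl x) (b - cl x) (real (Suc k))))" for n x
  define G where "G x = (SUP n. gf n x)" for x
  define D where "D n x = liminf (\<lambda>k. ennreal (Qf a b (W n) (real (Suc k)) x) * indicator {a..b} x)" for n x

  have m1[measurable]: "(\<lambda>x. laplace_right (V n) (cl x) (b - cl x) k) \<in> borel_measurable borel" for n k
  proof (rule borel_measurable_continuous_onI)
    show "continuous_on UNIV (\<lambda>x. laplace_right (V n) (cl x) (b - cl x) k)"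
      by (rule continuous_on_compose2[OF lr_cont[OF _ Vc] cl_cont]) (use ab cl_in in auto)
  qed
  have mG[measurable]: "G \<in> borel_measurable borel"
    unfolding G_def gf_def by measurable
  have mQ[measurable]: "Qf a b (W n) k \<in> borel_measurable borel" for n k
    by (rule borel_measurable_continuous_onI[OF Qf_cont]) (use ab Wc in auto)
  have mD[measurable]: "D n \<in> borel_measurable borel" for n
    unfolding D_def by measurable

  have intD: "(\<integral>\<^sup>+x. D n x \<partial>lborel) \<le> ennreal (1 / real (Suc n))" for n
  proof -
    have Fatou: "(\<integral>\<^sup>+x. D n x \<partial>lborel) \<le> liminf (\<lambda>k. \<integral>\<^sup>+x. ennreal (Qf a b (W n) (real (Suc k)) x) * indicator {a..b} x \<partial>lborel)"
      unfolding D_def by (rule nn_integral_liminf) measurable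
    have each: "(\<integral>\<^sup>+x. ennreal (Qf a b (W n) (real (Suc k)) x) * indicator {a..b} x \<partial>lborel) \<le> ennreal (1 / real (Suc n))" for k
    proof -
      have "Qf a b (W n) (real (Suc k)) integrable_on {a..b}"
        by (rule integrable_continuous_interval, rule continuous_on_subset[OF Qf_cont]) (use ab Wc in auto)
      then have hi: "(Qf a b (W n) (real (Suc k)) has_integral integral {a..b} (Qf a b (W n) (real (Suc k)))) {a..b}"
        by (rule integrable_integral)
      have "(\<integral>\<^sup>+x. ennreal (Qf a b (W n) (real (Suc k)) x) * indicator {a..b} x \<partial>lborel) = ennreal (integral {a..b} (Qf a b (W n) (real (Suc k))))"
        by (rule nn_integral_has_integral_lebesgue'[OF _ hi]) (rule Qf_nonneg[OF _ Wc Wmono], use ab in auto)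
      also have "\<dots> \<le> ennreal (1 / real (Suc n))"
        using Qf_int_bound[OF ab Wc Wmono, of "real (Suc k)" n] Wgap[of n] by (intro ennreal_leI) simp
      finally show ?thesis .
    qed
    have "liminf (\<lambda>k. \<integral>\<^sup>+x. ennreal (Qf a b (W n) (real (Suc k)) x) * indicator {a..b} x \<partial>lborel)
        \<le> limsup (\<lambda>k. \<integral>\<^sup>+x. ennreal (Qf a b (W n) (real (Suc k)) x) * indicator {a..b} x \<partial>lborel)"
      by (rule Liminf_le_Limsup) simp
    also have "\<dots> \<le> ennreal (1 / real (Suc n))"
      by (rule Limsup_bounded) (use each in auto)
    finally show ?thesis using Fatou by simp
  qed

  have markov: "ennreal r * emeasure lborel {x\<in>{a..b}. ennreal r \<le> D n x} \<le> (\<integral>\<^sup>+x. D n x \<partial>lborel)" for r n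
  proof -
    have S: "{x\<in>{a..b}. ennreal r \<le> D n x} \<in> sets lborel" by measurable
    have "ennreal r * emeasure lborel {x\<in>{a..b}. ennreal r \<le> D n x} = (\<integral>\<^sup>+x. ennreal r * indicator {x\<in>{a..b}. ennreal r \<le> D n x} x \<partial>lborel)"
      by (rule nn_integral_cmult_indicator[OF S, symmetric])
    also have "\<dots> \<le> (\<integral>\<^sup>+x. D n x \<partial>lborel)"
      by (rule nn_integral_mono) (auto simp: indicator_def)
    finally show ?thesis .
  qed

  define Sm where "Sm m = {x \<in> {a..b}. \<forall>n. ennreal (1 / real (Suc m)) \<le> D n x}" for m
  have Sm_sets[measurable]: "Sm m \<in> sets lborel" for m unfolding Sm_def by measurable
  have Sm_null: "Sm m \<in> null_sets lborel" for m
  proof -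
    let ?r = "1 / real (Suc m)"
    have le: "ennreal ?r * emeasure lborel (Sm m) \<le> ennreal (1 / real (Suc n))" for n
    proof -
      have "emeasure lborel (Sm m) \<le> emeasure lborel {x\<in>{a..b}. ennreal ?r \<le> D n x}"
        by (rule emeasure_mono) (auto simp: Sm_def)
      then have "ennreal ?r * emeasure lborel (Sm m) \<le> ennreal ?r * emeasure lborel {x\<in>{a..b}. ennreal ?r \<le> D n x}"
        by (rule mult_left_mono) simp
      also have "\<dots> \<le> ennreal (1 / real (Suc n))" using markov intD order_trans by blast
      finally show ?thesis .
    qed
    have "emeasure lborel (Sm m) \<le> emeasure lborel {a..b}"
      by (rule emeasure_mono) (auto simp: Sm_def)
    then have fin: "emeasure lborel (Sm m) \<noteq> \<infinity>" using ab by (auto simp: top_unique)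
    define \<mu> where "\<mu> = measure lborel (Sm m)"
    have mu: "emeasure lborel (Sm m) = ennreal \<mu>" "\<mu> \<ge> 0"
      using fin unfolding \<mu>_def by (auto simp: emeasure_eq_ennreal_measure)
    have "\<mu> = 0"
    proof (rule ccontr)
      assume "\<mu> \<noteq> 0"
      then have "?r * \<mu> > 0" using mu by simp
      then obtain n where n: "inverse (real (Suc n)) < ?r * \<mu>" using reals_Archimedean by blast
      have "ennreal (?r * \<mu>) = ennreal ?r * ennreal \<mu>"
        by (rule ennreal_mult) (use mu in auto)
      then have "ennreal (?r * \<mu>) \<le> ennreal (1 / real (Suc n))"
        using le[of n] mu(1) by simp
      then have "?r * \<mu> \<le> 1 / real (Suc n)" by (subst (asm) ennreal_le_iff) auto
      then show False using n by (simp add: inverse_eq_divide)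
    qed
    then show ?thesis using mu Sm_sets[of m] by (auto intro: null_setsI)
  qed
  have AE1: "AE x in lborel. \<forall>m. x \<notin> Sm m"
    by (rule AE_all_countable[THEN iffD2]) (use Sm_null AE_not_in in blast)
  have AE2: "AE x in lborel. x \<noteq> b" by (rule AE_lborel_singleton)

  have gf_le: "gf n x \<le> ereal (f x)" if x: "x \<in> {a..<b}" for n x
  proof -
    have "gf n x = limsup (\<lambda>k. ereal (laplace_right (V n) x (b - x) (real (Suc k))))"
      unfolding gf_def using x cl_id by simp
    also have "\<dots> \<le> Limsup at_top (\<lambda>s. ereal (laplace_right (V n) x (b - x) s))"
      by (rule seq_limsup_le)
    also have "\<dots> \<le> ereal (f x)" by (rule minor_limsup[OF Vm x])
    finally show ?thesis .
  qed

  have key: "ennreal r \<le> D n x"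
    if x: "x \<in> {a..<b}" and r: "r > 0" and gapx: "ereal r < ereal (f x) - gf n x" for n x r
  proof -
    have clx: "cl x = x" using x cl_id by simp
    have hUx: "ereal (f x) \<le> liminf (\<lambda>k. ereal (laplace_right (U n) x (b - x) (real (Suc k))))"
      using major_liminf[OF Um x] seq_liminf_ge order_trans by blast
    have gfx: "gf n x = limsup (\<lambda>k. ereal (laplace_right (V n) x (b - x) (real (Suc k))))"
      unfolding gf_def clx ..
    have glt: "gf n x < ereal (f x - r)" using gapx by (cases "gf n x") auto
    have Dx: "D n x = liminf (\<lambda>k. ennreal (Qf a b (W n) (real (Suc k)) x))"
      unfolding D_def using x by simp
    show ?thesis
      unfolding Dx le_Liminf_iff
    proof (intro allI impI)
      fix y :: ennreal assume y: "y < ennreal r"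
      obtain y' where y': "y = ennreal y'" "0 \<le> y'"
        using y by (cases y rule: ennreal_cases) auto
      have yr: "y' < r" using y y' by (simp add: ennreal_less_iff)
      define e where "e = r - y'"
      have e: "e > 0" using yr by (simp add: e_def)
      have "ereal (f x - r) < ereal (f x - r + e/2)" using e by simp
      then have "gf n x < ereal (f x - r + e/2)" using glt by (meson order.strict_trans)
      then have ev2: "eventually (\<lambda>k. ereal (laplace_right (V n) x (b - x) (real (Suc k))) < ereal (f x - r + e/2)) sequentially"
      proof -
        let ?X = "\<lambda>k. ereal (laplace_right (V n) x (b - x) (real (Suc k)))"
        have "\<forall>y>limsup ?X. eventually (\<lambda>k. ?X k < y) sequentially"
          using Limsup_le_iff[where C="limsup ?X" and F=sequentially and X="?X"] by simp
        moreover have "limsup ?X < ereal (f x - r + e/2)" using gfx \<open>gf n x < ereal (f x - r + e/2)\<close> by metis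
        ultimately show ?thesis by blast
      qed
      have "ereal (f x - e/4) < ereal (f x)" using e by simp
      then have ev1: "eventually (\<lambda>k. ereal (f x - e/4) < ereal (laplace_right (U n) x (b - x) (real (Suc k)))) sequentially"
        using hUx unfolding le_Liminf_iff by (meson order.strict_trans2)
      show "eventually (\<lambda>k. y < ennreal (Qf a b (W n) (real (Suc k)) x)) sequentially"
        using ev1 ev2
      proof eventually_elim
        case (elim k)
        have "laplace_right (W n) x (b - x) (real (Suc k)) = laplace_right (U n) x (b - x) (real (Suc k)) - laplace_right (V n) x (b - x) (real (Suc k))"
          unfolding W_def by (rule lr_diff[OF Uc Vc]) (use x in auto)
        moreover have "f x - e/4 < laplace_right (U n) x (b - x) (real (Suc k))" using elim(1) by simp
        moreover have "laplace_right (V n) x (b - x) (real (Suc k)) < f x - r + e/2" using elim(2) by simp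
        ultimately have "y' < laplace_right (W n) x (b - x) (real (Suc k))"
          using e e_def by linarith
        also have "\<dots> \<le> Qf a b (W n) (real (Suc k)) x"
          by (rule lr_le_Qf(2)[OF _ Wc Wmono]) (use ab x in auto)
        finally show ?case using y' by (simp add: ennreal_less_iff)
      qed
    qed
  qed

  have pt: "f x = real_of_ereal (G x)" if x: "x \<in> {a..b}" "x \<noteq> b" "\<forall>m. x \<notin> Sm m" for x
  proof -
    have x': "x \<in> {a..<b}" using x by auto
    have Gle: "G x \<le> ereal (f x)" unfolding G_def by (rule SUP_least) (use gf_le[OF x'] in auto)
    have "G x = ereal (f x)"
    proof (rule ccontr)
      assume "G x \<noteq> ereal (f x)"
      then have Glt: "G x < ereal (f x)" using Gle by simp
      obtain m where m: "ereal (1 / real (Suc m)) < ereal (f x) - G x"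
      proof (cases "G x")
        case (real g)
        then have "f x - g > 0" using Glt by simp
        then obtain m where "inverse (real (Suc m)) < f x - g" using reals_Archimedean by blast
        then show ?thesis using that[of m] real by (simp add: inverse_eq_divide)
      next
        case MInf then show ?thesis using that[of 0] by simp
      next
        case PInf then show ?thesis using Glt by simp
      qed
      have "\<forall>n. ennreal (1 / real (Suc m)) \<le> D n x"
      proof
        fix n
        have "gf n x \<le> G x" unfolding G_def by (rule SUP_upper) simp
        then have "ereal (f x) - G x \<le> ereal (f x) - gf n x" by (intro ereal_minus_mono) auto
        then have "ereal (1 / real (Suc m)) < ereal (f x) - gf n x" using m by simp
        then show "ennreal (1 / real (Suc m)) \<le> D n x" by (intro key[OF x']) auto
      qed
      then have "x \<in> Sm m" using x unfolding Sm_def by auto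
      then show False using x by auto
    qed
    then show ?thesis by simp
  qed

  define h0 where "h0 x = (if x \<in> {a..b} then real_of_ereal (G x) else 0)" for x
  have "h0 \<in> borel_measurable borel" unfolding h0_def by measurable
  then have h0m: "h0 \<in> borel_measurable lebesgue"
    by (intro measurable_completion) simp
  have "AE x in lborel. h0 x = (if x \<in> {a..b} then f x else 0)"
    using AE1 AE2 by eventually_elim (use pt in \<open>auto simp: h0_def\<close>)
  then have "AE x in lebesgue. h0 x = (if x \<in> {a..b} then f x else 0)"
    by (rule AE_completion)
  then have "(\<lambda>x. if x \<in> {a..b} then f x else 0) \<in> borel_measurable lebesgue"
    by (rule borel_measurable_AE[OF h0m])
  then have "(\<lambda>x. if x \<in> {a..b} then f x else 0) \<in> borel_measurable (lebesgue_on {a..b})"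
    by (rule measurable_restrict_space1)
  then show ?thesis
    by (subst measurable_lebesgue_cong[where g = "\<lambda>x. if x \<in> {a..b} then f x else 0"]) auto
qed


end
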